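(* Let $m\ge1$ and $n\ge 2$. The number of interval-closed sets $I$ of $[m]\times[n]$ such that for every $a\in[m]$ there is some $b$ with $(a,b)\in I$ equals the Narayana number \[N(n+m,n)=\frac{1}{n}\binom{n+m}{n-1}\binom{n+m-1}{n-1},\] which is also the number of order ideals of $[m]\times[n-1]\times[2]$; indeed these interval-closed sets are in bijection with the order ideals of $[m]\times[n-1]\times[2]$.
   Context: $[k]$ is the chain $1<\cdots<k$; products of chains carry the componentwise order. A subset $I$ of a poset is interval-closed if for all $x,y\in I$ and $z$ with $x\le z\le y$ we have $z\in I$. *)

theory Defs
  imports Complex_Main
begin

definition grid2 :: "nat \<Rightarrow> nat \<Rightarrow> (nat \<times> nat) set" where
  "grid2 m n = {1..m} \<times> {1..n}"

definition le2 :: "nat \<times> nat \<Rightarrow> nat \<times> nat \<Rightarrow> bool" where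
  "le2 p q \<longleftrightarrow> fst p \<le> fst q \<and> snd p \<le> snd q"

definition grid3 :: "nat \<Rightarrow> nat \<Rightarrow> nat \<Rightarrow> (nat \<times> nat \<times> nat) set" where
  "grid3 a b c = {1..a} \<times> {1..b} \<times> {1..c}"

definition le3 :: "nat \<times> nat \<times> nat \<Rightarrow> nat \<times> nat \<times> nat \<Rightarrow> bool" where
  "le3 p q \<longleftrightarrow> fst p \<le> fst q \<and> fst (snd p) \<le> fst (snd q) \<and> snd (snd p) \<le> snd (snd q)"

definition interval_closed :: "'a set \<Rightarrow> ('a \<Rightarrow> 'a \<Rightarrow> bool) \<Rightarrow> 'a set \<Rightarrow> bool" where
  "interval_closed P le I \<longleftrightarrow> I \<subseteq> P \<and>
     (\<forall>x\<in>I. \<forall>y\<in>I. \<forall>z\<in>P. le x z \<and> le z y \<longrightarrow> z \<in> I)"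

definition order_ideal :: "'a set \<Rightarrow> ('a \<Rightarrow> 'a \<Rightarrow> bool) \<Rightarrow> 'a set \<Rightarrow> bool" where
  "order_ideal P le J \<longleftrightarrow> J \<subseteq> P \<and> (\<forall>y\<in>J. \<forall>x\<in>P. le x y \<longrightarrow> x \<in> J)"

definition row_full_ics :: "nat \<Rightarrow> nat \<Rightarrow> (nat \<times> nat) set set" where
  "row_full_ics m n = {I. interval_closed (grid2 m n) le2 I \<and>
                          (\<forall>a\<in>{1..m}. \<exists>b. (a, b) \<in> I)}"

definition narayana :: "nat \<Rightarrow> nat \<Rightarrow> real" where
  "narayana N k = (1 / real k) * real (N choose (k - 1)) * real ((N - 1) choose (k - 1))"

end

theory Submission
  imports Defs
begin


definition D :: "nat \<Rightarrow> nat \<Rightarrow> nat \<Rightarrow> int" where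
"D m a b = int ((a+m-1) choose m) * int ((b+m-1) choose m) - int ((a+m-1) choose (m+1)) * int ((b+m-1) choose b)"

lemma tele:
  fixes f F :: "nat \<Rightarrow> int"
  assumes "1 \<le> x" "x \<le> Suc b" "\<And>y. 1 \<le> y \<Longrightarrow> F (Suc y) - F y = f y"
  shows "(\<Sum>y=x..b. f y) = F (Suc b) - F x"
proof -
  have "(\<Sum>y=x..b. f y) = (\<Sum>y=x..b. F (Suc y) - F y)"
    using assms by (intro sum.cong) auto
  also have "\<dots> = F (Suc b) - F x" using assms(2) by (rule sum_Suc_diff)
  finally show ?thesis .
qed

lemma pascal1: "0 < y \<Longrightarrow> (y + m) choose Suc k = ((y+m-1) choose k) + ((y+m-1) choose Suc k)"
proof -
  assume "0 < y"
  then have e: "y + m = Suc (y+m-1)" by simp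
  show ?thesis by (metis e binomial_Suc_Suc)
qed

lemma hock1:
  assumes "1 \<le> x" "x \<le> Suc b"
  shows "(\<Sum>y=x..b. int ((y+m-1) choose m)) = int ((b+m) choose (m+1)) - int ((x+m-1) choose (m+1))"
proof -
  have "(\<Sum>y=x..b. int ((y+m-1) choose m)) = int ((Suc b+m-1) choose (m+1)) - int ((x+m-1) choose (m+1))"
    using assms by (rule tele) (simp add: pascal1)
  then show ?thesis by simp
qed

lemma hock2:
  assumes "1 \<le> x" "x \<le> Suc b"
  shows "(\<Sum>y=x..b. int ((y+m-1) choose y)) = int ((b+m) choose b) - int ((x+m-1) choose (x-1))"
proof -
  have "(\<Sum>y=x..b. int ((y+m-1) choose y)) = int ((Suc b+m-1) choose (Suc b - 1)) - int ((x+m-1) choose (x-1))"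
  proof (rule tele[OF assms])
    fix y :: nat assume y: "1 \<le> y"
    then obtain z where z: "y = Suc z" by (cases y) auto
    show "int ((Suc y + m - 1) choose (Suc y - 1)) - int ((y + m - 1) choose (y - 1)) = int ((y + m - 1) choose y)"
      unfolding z by simp
  qed
  then show ?thesis by simp
qed

lemma hock4:
  assumes "1 \<le> x" "x \<le> Suc b"
  shows "(\<Sum>y=x..b. int ((y+m-1) choose (m+1))) = int ((b+m) choose (m+2)) - int ((x+m-1) choose (m+2))"
proof -
  have "(\<Sum>y=x..b. int ((y+m-1) choose (m+1))) = int ((Suc b+m-1) choose (m+2)) - int ((x+m-1) choose (m+2))"
    using assms by (rule tele) (simp add: pascal1)
  then show ?thesis by simp
qed

lemma inner:
  assumes "1 \<le> x" "x \<le> Suc b"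
  shows "(\<Sum>y=x..b. D m x y) = int ((x+m-1) choose m) * int ((b+m) choose (m+1)) - int ((x+m-1) choose (m+1)) * int ((b+m) choose b)"
proof -
  have sym: "(x+m-1) choose (x-1) = (x+m-1) choose m"
    using binomial_symmetric[of "x-1" "x+m-1"] assms(1) by simp
  have "(\<Sum>y=x..b. D m x y) = int ((x+m-1) choose m) * (\<Sum>y=x..b. int ((y+m-1) choose m))
       - int ((x+m-1) choose (m+1)) * (\<Sum>y=x..b. int ((y+m-1) choose y))"
    unfolding D_def by (simp add: sum_subtractf sum_distrib_left)
  also have "\<dots> = int ((x+m-1) choose m) * (int ((b+m) choose (m+1)) - int ((x+m-1) choose (m+1)))
       - int ((x+m-1) choose (m+1)) * (int ((b+m) choose b) - int ((x+m-1) choose m))"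
    unfolding hock1[OF assms] hock2[OF assms] sym ..
  finally show ?thesis by (simp add: algebra_simps)
qed

lemma ident:
  assumes "1 \<le> a" "a \<le> b"
  shows "(\<Sum>x=1..a. \<Sum>y=x..b. D m x y) = D (Suc m) a b"
proof -
  have "(\<Sum>x=1..a. \<Sum>y=x..b. D m x y) = (\<Sum>x=1..a. int ((x+m-1) choose m) * int ((b+m) choose (m+1)) - int ((x+m-1) choose (m+1)) * int ((b+m) choose b))"
  proof (rule sum.cong[OF refl])
    fix x assume "x \<in> {1..a}"
    then show "(\<Sum>y=x..b. D m x y) = int ((x+m-1) choose m) * int ((b+m) choose (m+1)) - int ((x+m-1) choose (m+1)) * int ((b+m) choose b)"
      using assms by (intro inner) auto
  qed
  also have "\<dots> = (\<Sum>x=1..a. int ((x+m-1) choose m)) * int ((b+m) choose (m+1)) - (\<Sum>x=1..a. int ((x+m-1) choose (m+1))) * int ((b+m) choose b)"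
    by (simp add: sum_subtractf sum_distrib_right)
  also have "\<dots> = int ((a+m) choose (m+1)) * int ((b+m) choose (m+1)) - int ((a+m) choose (m+2)) * int ((b+m) choose b)"
    using hock1[of 1 a m] hock4[of 1 a m] by (simp add: binomial_eq_0)
  also have "\<dots> = D (Suc m) a b" unfolding D_def by simp
  finally show ?thesis .
qed

lemma D0: "1 \<le> a \<Longrightarrow> 1 \<le> b \<Longrightarrow> D 0 a b = 1"
  unfolding D_def by simp

lemma Dnar:
  assumes "1 \<le> m" "2 \<le> n"
  shows "real_of_int (D m n n) = (1 / real n) * real ((n + m) choose (n - 1)) * real ((n + m - 1) choose (n - 1))"
proof -
  obtain p where p: "n = Suc (Suc p)" using assms(2) by (metis add_2_eq_Suc le_Suc_ex)
  obtain q where q: "m = Suc q" using assms(1) by (cases m) auto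
  have e1: "n + m - 1 = Suc (Suc (p + q))" and e2: "n + m = Suc (Suc (Suc (p+q)))"
    and e3: "n - 1 = Suc p" using p q by auto
  have "real_of_int (D m n n) = real ((p+q+2) choose (q+1)) * real ((p+q+2) choose (q+1))
      - real ((p+q+2) choose (q+2)) * real ((p+q+2) choose (p+2))"
    unfolding D_def using p q by simp
  also have "\<dots> = fact (p+q+2) / (fact (q+1) * fact (p+1)) * (fact (p+q+2) / (fact (q+1) * fact (p+1)))
      - fact (p+q+2) / (fact (q+2) * fact p) * (fact (p+q+2) / (fact (p+2) * fact q))"
    using binomial_fact[of "q+1" "p+q+2", where 'a=real] binomial_fact[of "q+2" "p+q+2", where 'a=real]
      binomial_fact[of "p+2" "p+q+2", where 'a=real] by (simp add: mult.commute)
  also have "\<dots> = (1 / real n) * (fact (p+q+3) / (fact (p+1) * fact (q+2))) * (fact (p+q+2) / (fact (p+1) * fact (q+1)))"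
  proof -
    define F :: real where "F = fact (p+q+2)"
    have f1: "fact (p+q+3) = (real p + real q + 3) * F"
    proof -
      have "p+q+3 = Suc (p+q+2)" by simp
      then have "(fact (p+q+3)::real) = real (Suc (p+q+2)) * fact (p+q+2)" by (simp only: fact_Suc)
      then show ?thesis unfolding F_def by simp
    qed
    have f2: "(fact (q+1)::real) = (real q + 1) * fact q" "(fact (p+1)::real) = (real p + 1) * fact p"
      "(fact (q+2)::real) = (real q + 2) * ((real q + 1) * fact q)" "(fact (p+2)::real) = (real p + 2) * ((real p + 1) * fact p)"
      by (simp_all add: fact_Suc numeral_2_eq_2 algebra_simps)
    have rn: "real n = real p + 2" using p by simp
    have A: "(fact p::real) > 0" "(fact q::real) > 0" by auto
    have alg: "\<And>A B x y :: real. A > 0 \<Longrightarrow> B > 0 \<Longrightarrow> x \<ge> 0 \<Longrightarrow> y \<ge> 0 \<Longrightarrow>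
      F/((y+1)*B*((x+1)*A)) * (F/((y+1)*B*((x+1)*A))) - F/((y+2)*((y+1)*B)*A) * (F/((x+2)*((x+1)*A)*B))
      = 1/(x+2) * ((x+y+3)*F/((x+1)*A*((y+2)*((y+1)*B)))) * (F/((x+1)*A*((y+1)*B)))"
    proof -
      fix A B x y :: real assume h: "A > 0" "B > 0" "x \<ge> 0" "y \<ge> 0"
      have nz: "x+1 \<noteq> 0" "y+1 \<noteq> 0" "x+2 \<noteq> 0" "y+2 \<noteq> 0" "A \<noteq> 0" "B \<noteq> 0" using h by auto
      show "?thesis A B x y" using nz
        by (simp add: divide_simps) (simp add: algebra_simps)
    qed
    show ?thesis unfolding F_def[symmetric] f1 f2 rn
      by (rule alg[OF A(1) A(2)]) auto
  qed
  also have "\<dots> = (1 / real n) * real ((n + m) choose (n - 1)) * real ((n + m - 1) choose (n - 1))"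
  proof -
    have nm: "n + m = p+q+3" "n-1 = p+1" "n+m-1 = p+q+2" using p q by auto
    have le1: "p+1 \<le> p+q+3" and eq1: "p+q+3-(p+1) = q+2" by auto
    have le2: "p+1 \<le> p+q+2" and eq2: "p+q+2-(p+1) = q+1" by auto
    have b1: "real ((p+q+3) choose (p+1)) = fact (p+q+3) / (fact (p+1) * fact (q+2))"
      using binomial_fact[OF le1, where 'a=real] unfolding eq1 .
    have b2: "real ((p+q+2) choose (p+1)) = fact (p+q+2) / (fact (p+1) * fact (q+1))"
      using binomial_fact[OF le2, where 'a=real] unfolding eq2 .
    show ?thesis unfolding nm(3) unfolding nm(1) nm(2) b1 b2 ..
  qed
  finally show ?thesis .
qed



definition Fs :: "nat \<Rightarrow> nat \<Rightarrow> nat \<Rightarrow> ((nat\<Rightarrow>nat)\<times>(nat\<Rightarrow>nat)) set" where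
"Fs m a b = {(l,r). (\<forall>i<m. 1 \<le> l i \<and> l i \<le> r i \<and> l i \<le> (if i = 0 then a else l (i-1))
      \<and> r i \<le> (if i = 0 then b else r (i-1))) \<and> (\<forall>i\<ge>m. l i = 0 \<and> r i = 0)}"

lemma Fs_0: "Fs 0 a b = {(\<lambda>_. 0, \<lambda>_. 0)}"
  unfolding Fs_def by auto

definition cons2 :: "(nat \<times> nat) \<times> ((nat\<Rightarrow>nat)\<times>(nat\<Rightarrow>nat)) \<Rightarrow> (nat\<Rightarrow>nat)\<times>(nat\<Rightarrow>nat)" where
"cons2 z = (case_nat (fst (fst z)) (fst (snd z)), case_nat (snd (fst z)) (snd (snd z)))"

definition PS :: "nat \<Rightarrow> nat \<Rightarrow> nat \<Rightarrow> ((nat \<times> nat) \<times> ((nat\<Rightarrow>nat)\<times>(nat\<Rightarrow>nat))) set" where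
"PS m a b = (SIGMA p : (SIGMA x:{1..a}. {x..b}). Fs m (fst p) (snd p))"

lemma Fs_Suc: "Fs (Suc m) a b = cons2 ` PS m a b"
proof
  show "cons2 ` PS m a b \<subseteq> Fs (Suc m) a b"
  proof
    fix z assume "z \<in> cons2 ` PS m a b"
    then obtain x y l r where z: "z = cons2 ((x,y),(l,r))" and xy: "1 \<le> x" "x \<le> a" "x \<le> y" "y \<le> b"
      and lr: "(l,r) \<in> Fs m x y" unfolding PS_def by auto
    have c1: "\<forall>i<m. 1 \<le> l i \<and> l i \<le> r i \<and> l i \<le> (if i = 0 then x else l (i-1))
      \<and> r i \<le> (if i = 0 then y else r (i-1))" and c2: "\<forall>i\<ge>m. l i = 0 \<and> r i = 0"
      using lr unfolding Fs_def by auto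
    show "z \<in> Fs (Suc m) a b"
    proof -
      have A: "1 \<le> case_nat x l i \<and> case_nat x l i \<le> case_nat y r i \<and>
          case_nat x l i \<le> (if i = 0 then a else case_nat x l (i - 1)) \<and>
          case_nat y r i \<le> (if i = 0 then b else case_nat y r (i - 1))" if i: "i < Suc m" for i
      proof (cases i)
        case 0 then show ?thesis using xy by simp
      next
        case (Suc j)
        then have "j < m" using i by simp
        then show ?thesis using c1 xy Suc by (cases j) auto
      qed
      have B: "case_nat x l i = 0 \<and> case_nat y r i = 0" if i: "Suc m \<le> i" for i
        using i c2 by (cases i) auto
      show ?thesis unfolding z cons2_def Fs_def mem_Collect_eq prod.case fst_conv snd_conv by (intro conjI allI impI) (simp_all only: A B)
    qed
  qed
next
  show "Fs (Suc m) a b \<subseteq> cons2 ` PS m a b"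
  proof
    fix z assume z: "z \<in> Fs (Suc m) a b"
    obtain L R where LR: "z = (L,R)" by fastforce
    have c1: "\<forall>i<Suc m. 1 \<le> L i \<and> L i \<le> R i \<and> L i \<le> (if i = 0 then a else L (i-1))
      \<and> R i \<le> (if i = 0 then b else R (i-1))" and c2: "\<forall>i\<ge>Suc m. L i = 0 \<and> R i = 0"
      using z unfolding Fs_def LR by auto
    have e: "z = cons2 ((L 0, R 0), (L \<circ> Suc, R \<circ> Suc))"
      unfolding LR cons2_def by (auto intro!: ext split: nat.split)
    have h: "\<forall>i<m. 1 \<le> L (Suc i) \<and> L (Suc i) \<le> R (Suc i) \<and> L (Suc i) \<le> L i \<and> R (Suc i) \<le> R i"
      using c1 by auto
    have h2: "\<forall>i\<ge>m. L (Suc i) = 0 \<and> R (Suc i) = 0" using c2 by auto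
    have S1: "(L \<circ> Suc, R \<circ> Suc) \<in> Fs m (L 0) (R 0)"
      unfolding Fs_def using h h2 by (auto simp: gr0_conv_Suc)
    have S0: "1 \<le> L 0" "L 0 \<le> a" "L 0 \<le> R 0" "R 0 \<le> b" using c1 by auto
    have "((L 0, R 0), (L \<circ> Suc, R \<circ> Suc)) \<in> PS m a b"
      unfolding PS_def using S0 S1 by simp
    then show "z \<in> cons2 ` PS m a b" using e by blast
  qed
qed

lemma cons2_inj: "inj cons2"
proof (rule injI)
  fix z w assume h: "cons2 z = cons2 w"
  obtain x y l r where z: "z = ((x,y),(l,r))" by (metis prod.exhaust)
  obtain x' y' l' r' where w: "w = ((x',y'),(l',r'))" by (metis prod.exhaust)
  have h1: "case_nat x l = case_nat x' l'" and h2: "case_nat y r = case_nat y' r'"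
    using h unfolding z w cons2_def by auto
  have "x = x'" using fun_cong[OF h1, of 0] by simp
  moreover have "y = y'" using fun_cong[OF h2, of 0] by simp
  moreover have "l = l'" using fun_cong[OF h1, of "Suc i" for i] by (intro ext) simp
  moreover have "r = r'" using fun_cong[OF h2, of "Suc i" for i] by (intro ext) simp
  ultimately show "z = w" unfolding z w by simp
qed

lemma Fs_finite: "finite (Fs m a b)"
proof (induction m arbitrary: a b)
  case 0 then show ?case by (simp add: Fs_0)
next
  case (Suc m)
  then show ?case unfolding Fs_Suc PS_def by (intro finite_imageI finite_SigmaI) auto
qed

lemma Fs_card_rec: "card (Fs (Suc m) a b) = (\<Sum>x=1..a. \<Sum>y=x..b. card (Fs m x y))"
proof -
  have "card (Fs (Suc m) a b) = card (PS m a b)"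
    unfolding Fs_Suc by (rule card_image) (rule inj_on_subset[OF cons2_inj], simp)
  also have "\<dots> = (\<Sum>p\<in>(SIGMA x:{1..a}. {x..b}). card (Fs m (fst p) (snd p)))"
    unfolding PS_def by (rule card_SigmaI) (auto simp: Fs_finite)
  also have "\<dots> = (\<Sum>x=1..a. \<Sum>y=x..b. card (Fs m x y))"
    by (subst sum.Sigma) (auto simp: split_beta)
  finally show ?thesis .
qed

lemma Fs_cond: "(l,r) \<in> Fs m a b \<Longrightarrow> i < m \<Longrightarrow> 1 \<le> l i \<and> l i \<le> r i \<and> l i \<le> (if i = 0 then a else l (i-1))
      \<and> r i \<le> (if i = 0 then b else r (i-1))"
  unfolding Fs_def by auto

lemma Fs_out: "(l,r) \<in> Fs m a b \<Longrightarrow> m \<le> i \<Longrightarrow> l i = 0 \<and> r i = 0"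
  unfolding Fs_def by auto

lemma Fs_mono: assumes "(l,r) \<in> Fs m a b" shows "i \<le> j \<Longrightarrow> j < m \<Longrightarrow> l j \<le> l i \<and> r j \<le> r i"
proof (induction j)
  case 0 then show ?case by simp
next
  case (Suc j)
  show ?case
  proof (cases "i = Suc j")
    case True then show ?thesis by simp
  next
    case False
    then have "i \<le> j" "j < m" using Suc.prems by auto
    then have "l j \<le> l i \<and> r j \<le> r i" using Suc.IH by simp
    moreover have "l (Suc j) \<le> l j \<and> r (Suc j) \<le> r j" using Fs_cond[OF assms Suc.prems(2)] by simp
    ultimately show ?thesis by linarith
  qed
qed

lemma Fs_bound: assumes "(l,r) \<in> Fs m a b" "i < m"
  shows "1 \<le> l i \<and> l i \<le> r i \<and> l i \<le> a \<and> r i \<le> b"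
proof -
  have "l i \<le> l 0 \<and> r i \<le> r 0" using Fs_mono[OF assms(1), of 0 i] assms(2) by simp
  moreover have "l 0 \<le> a \<and> r 0 \<le> b" using Fs_cond[OF assms(1), of 0] assms(2) by simp
  ultimately show ?thesis using Fs_cond[OF assms] by linarith
qed

lemma Fs_intro: "(\<And>i. i < m \<Longrightarrow> 1 \<le> l i \<and> l i \<le> r i \<and> l i \<le> (if i = 0 then a else l (i-1))
      \<and> r i \<le> (if i = 0 then b else r (i-1))) \<Longrightarrow> (\<And>i. m \<le> i \<Longrightarrow> l i = 0 \<and> r i = 0) \<Longrightarrow> (l,r) \<in> Fs m a b"
  unfolding Fs_def by auto

lemma Fs_count: "1 \<le> a \<Longrightarrow> a \<le> b \<Longrightarrow> int (card (Fs m a b)) = D m a b"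
proof (induction m arbitrary: a b)
  case 0 then show ?case by (simp add: Fs_0 D0)
next
  case (Suc m)
  have "int (card (Fs (Suc m) a b)) = (\<Sum>x=1..a. \<Sum>y=x..b. int (card (Fs m x y)))"
    unfolding Fs_card_rec by simp
  also have "\<dots> = (\<Sum>x=1..a. \<Sum>y=x..b. D m x y)"
    by (intro sum.cong refl) (use Suc.IH in auto)
  also have "\<dots> = D (Suc m) a b" using Suc.prems by (rule ident)
  finally show ?case .
qed



definition rowset :: "(nat\<times>nat) set \<Rightarrow> nat \<Rightarrow> nat set" where "rowset I a = {b. (a,b) \<in> I}"

definition phi :: "nat \<Rightarrow> (nat\<times>nat) set \<Rightarrow> (nat\<Rightarrow>nat)\<times>(nat\<Rightarrow>nat)" where
  "phi m I = (\<lambda>i. if i<m then Min (rowset I (Suc i)) else 0, \<lambda>i. if i<m then Max (rowset I (Suc i)) else 0)"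

definition psi :: "nat \<Rightarrow> (nat\<Rightarrow>nat)\<times>(nat\<Rightarrow>nat) \<Rightarrow> (nat\<times>nat) set" where
  "psi m p = {(a,b). 1 \<le> a \<and> a \<le> m \<and> fst p (a-1) \<le> b \<and> b \<le> snd p (a-1)}"

lemma rf_icl: "I \<in> row_full_ics m n \<Longrightarrow> interval_closed (grid2 m n) le2 I"
  unfolding row_full_ics_def mem_Collect_eq by (rule conjunct1)

lemma rf_full: "I \<in> row_full_ics m n \<Longrightarrow> \<forall>a\<in>{1..m}. \<exists>b. (a, b) \<in> I"
  unfolding row_full_ics_def mem_Collect_eq by (rule conjunct2)

lemma ic_sub: "interval_closed P le I \<Longrightarrow> I \<subseteq> P"
  unfolding interval_closed_def by (rule conjunct1)

lemma ic_cl: "interval_closed P le I \<Longrightarrow> (\<forall>x\<in>I. \<forall>y\<in>I. \<forall>z\<in>P. le x z \<and> le z y \<longrightarrow> z \<in> I)"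
  unfolding interval_closed_def by (rule conjunct2)

lemma rf_sub: "I \<in> row_full_ics m n \<Longrightarrow> I \<subseteq> grid2 m n"
  by (rule ic_sub[OF rf_icl])

lemma rf_ic: assumes "I \<in> row_full_ics m n" "x \<in> I" "y \<in> I" "z \<in> grid2 m n" "le2 x z" "le2 z y" shows "z \<in> I"
  using ic_cl[OF rf_icl[OF assms(1)]] assms(2-6) by blast

lemma row_sub: assumes "I \<in> row_full_ics m n" shows "rowset I a \<subseteq> {1..n}"
proof
  fix b assume "b \<in> rowset I a"
  then have "(a,b) \<in> I" by (simp add: rowset_def)
  then have "(a,b) \<in> grid2 m n" using rf_sub[OF assms] by blast
  then show "b \<in> {1..n}" by (simp add: grid2_def)
qed

lemma row_fin: assumes "I \<in> row_full_ics m n" shows "finite (rowset I a)"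
  using finite_subset[OF row_sub[OF assms]] by simp

lemma row_ne: assumes "I \<in> row_full_ics m n" "a \<in> {1..m}" shows "rowset I a \<noteq> {}"
proof -
  have "\<forall>a\<in>{1..m}. \<exists>b. (a, b) \<in> I" by (rule rf_full[OF assms(1)])
  then obtain b where "(a,b) \<in> I" using assms(2) by blast
  then show ?thesis by (auto simp: rowset_def)
qed

lemma row_int: assumes I: "I \<in> row_full_ics m n" and "b1 \<in> rowset I a" "b2 \<in> rowset I a" "b1 \<le> b" "b \<le> b2"
  shows "b \<in> rowset I a"
proof -
  have x: "(a,b1) \<in> I" and y: "(a,b2) \<in> I" using assms(2,3) unfolding rowset_def by auto
  have "(a,b1) \<in> grid2 m n" "(a,b2) \<in> grid2 m n" using x y rf_sub[OF I] by blast+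
  then have z: "(a,b) \<in> grid2 m n" using assms(4,5) unfolding grid2_def by auto
  have "(a,b) \<in> I"
    by (rule rf_ic[OF I x y z]) (use assms(4,5) in \<open>simp_all add: le2_def\<close>)
  then show ?thesis unfolding rowset_def by simp
qed

lemma row_iff: assumes I: "I \<in> row_full_ics m n" and a: "a \<in> {1..m}"
  shows "b \<in> rowset I a \<longleftrightarrow> Min (rowset I a) \<le> b \<and> b \<le> Max (rowset I a)"
proof -
  have fin: "finite (rowset I a)" and ne: "rowset I a \<noteq> {}" using row_fin[OF I] row_ne[OF I a] by auto
  show ?thesis
  proof
    assume "b \<in> rowset I a" then show "Min (rowset I a) \<le> b \<and> b \<le> Max (rowset I a)"
      using Min_le[OF fin] Max_ge[OF fin] by simp
  next
    assume "Min (rowset I a) \<le> b \<and> b \<le> Max (rowset I a)"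
    then show "b \<in> rowset I a" using row_int[OF I Min_in[OF fin ne] Max_in[OF fin ne]] by simp
  qed
qed

lemma row_mono: assumes I: "I \<in> row_full_ics m n" and a: "1 \<le> a" "Suc a \<le> m"
  shows "Min (rowset I (Suc a)) \<le> Min (rowset I a) \<and> Max (rowset I (Suc a)) \<le> Max (rowset I a)"
proof -
  define l where "l = Min (rowset I a)"
  define r where "r = Max (rowset I a)"
  define l' where "l' = Min (rowset I (Suc a))"
  define r' where "r' = Max (rowset I (Suc a))"
  have a1: "a \<in> {1..m}" and a2: "Suc a \<in> {1..m}" using a by auto
  have fin1: "finite (rowset I a)" and ne1: "rowset I a \<noteq> {}" using row_fin[OF I] row_ne[OF I a1] by auto
  have fin2: "finite (rowset I (Suc a))" and ne2: "rowset I (Suc a) \<noteq> {}" using row_fin[OF I] row_ne[OF I a2] by auto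
  have lr: "l \<in> rowset I a" "r \<in> rowset I a" "l \<le> r"
    unfolding l_def r_def by (rule Min_in[OF fin1 ne1], rule Max_in[OF fin1 ne1], rule Min_le[OF fin1 Max_in[OF fin1 ne1]])
  have lr': "l' \<in> rowset I (Suc a)" "r' \<in> rowset I (Suc a)" "l' \<le> r'"
    unfolding l'_def r'_def by (rule Min_in[OF fin2 ne2], rule Max_in[OF fin2 ne2], rule Min_le[OF fin2 Max_in[OF fin2 ne2]])
  show ?thesis
  proof (cases "l \<le> r'")
    case True
    have x: "(a,l) \<in> I" and y: "(Suc a, r') \<in> I" using lr lr' unfolding rowset_def by auto
    have ln: "l \<in> {1..n}" "r' \<in> {1..n}" using lr(1) lr'(2) row_sub[OF I, of a] row_sub[OF I, of "Suc a"] by auto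
    have "(Suc a, l) \<in> I"
      by (rule rf_ic[OF I x y]) (use a ln True in \<open>auto simp: grid2_def le2_def\<close>)
    then have "l \<in> rowset I (Suc a)" by (simp add: rowset_def)
    then have "l' \<le> l" unfolding l'_def by (rule Min_le[OF fin2])
    moreover have "(a, r') \<in> I"
      by (rule rf_ic[OF I x y]) (use a ln True in \<open>auto simp: grid2_def le2_def\<close>)
    then have "r' \<in> rowset I a" by (simp add: rowset_def)
    then have "r' \<le> r" unfolding r_def by (rule Max_ge[OF fin1])
    ultimately show ?thesis unfolding l_def r_def l'_def r'_def by simp
  next
    case False
    then show ?thesis using lr lr' unfolding l_def r_def l'_def r'_def by linarith
  qed
qed

lemma phi_in: assumes I: "I \<in> row_full_ics m n" shows "phi m I \<in> Fs m n n"
proof -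
  have h: "1 \<le> Min (rowset I (Suc i)) \<and> Min (rowset I (Suc i)) \<le> Max (rowset I (Suc i)) \<and>
    Max (rowset I (Suc i)) \<le> n \<and>
    (0 < i \<longrightarrow> Min (rowset I (Suc i)) \<le> Min (rowset I i) \<and> Max (rowset I (Suc i)) \<le> Max (rowset I i))"
    if i: "i < m" for i
  proof -
    have a: "Suc i \<in> {1..m}" using i by auto
    have fin: "finite (rowset I (Suc i))" and ne: "rowset I (Suc i) \<noteq> {}" using row_fin[OF I] row_ne[OF I a] by auto
    have mi: "Min (rowset I (Suc i)) \<in> rowset I (Suc i)" by (rule Min_in[OF fin ne])
    have ma: "Max (rowset I (Suc i)) \<in> rowset I (Suc i)" by (rule Max_in[OF fin ne])
    have "Min (rowset I (Suc i)) \<in> {1..n}" "Max (rowset I (Suc i)) \<in> {1..n}"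
      using mi ma row_sub[OF I, of "Suc i"] by blast+
    moreover have "Min (rowset I (Suc i)) \<le> Max (rowset I (Suc i))" by (rule Min_le[OF fin ma])
    moreover have "0 < i \<longrightarrow> Min (rowset I (Suc i)) \<le> Min (rowset I i) \<and> Max (rowset I (Suc i)) \<le> Max (rowset I i)"
    proof
      assume "0 < i" then show "Min (rowset I (Suc i)) \<le> Min (rowset I i) \<and> Max (rowset I (Suc i)) \<le> Max (rowset I i)"
        using row_mono[OF I, of i] i by simp
    qed
    ultimately show ?thesis by simp
  qed
  obtain f g where fg: "phi m I = (f,g)" by fastforce
  have f: "f i = (if i<m then Min (rowset I (Suc i)) else 0)" and g: "g i = (if i<m then Max (rowset I (Suc i)) else 0)" for i
    using fg unfolding phi_def by auto
  show ?thesis unfolding fg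
  proof (rule Fs_intro)
    fix i assume i: "i < m"
    show "1 \<le> f i \<and> f i \<le> g i \<and> f i \<le> (if i = 0 then n else f (i-1)) \<and> g i \<le> (if i = 0 then n else g (i-1))"
    proof (cases i)
      case 0 then show ?thesis using h[OF i] i unfolding f g by simp
    next
      case (Suc k) then show ?thesis using h[OF i] i unfolding f g by simp
    qed
  next
    fix i assume "m \<le> i" then show "f i = 0 \<and> g i = 0" unfolding f g by auto
  qed
qed


lemma psi_mem: "(a,b) \<in> psi m (l,r) \<longleftrightarrow> 1 \<le> a \<and> a \<le> m \<and> l (a-1) \<le> b \<and> b \<le> r (a-1)"
  by (simp add: psi_def)

lemma psi_in: assumes p: "(l,r) \<in> Fs m n n" shows "psi m (l,r) \<in> row_full_ics m n"
proof -
  have sub: "psi m (l,r) \<subseteq> grid2 m n"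
  proof
    fix z assume z: "z \<in> psi m (l,r)"
    obtain a b where ab: "z = (a,b)" by fastforce
    have h: "1 \<le> a" "a \<le> m" "l (a-1) \<le> b" "b \<le> r (a-1)" using z unfolding ab psi_mem by auto
    have "1 \<le> l (a-1) \<and> l (a-1) \<le> r (a-1) \<and> l (a-1) \<le> n \<and> r (a-1) \<le> n"
      using Fs_bound[OF p, of "a-1"] h by simp
    then show "z \<in> grid2 m n" unfolding ab grid2_def using h by simp
  qed
  have cl: "\<forall>x\<in>psi m (l,r). \<forall>y\<in>psi m (l,r). \<forall>z\<in>grid2 m n. le2 x z \<and> le2 z y \<longrightarrow> z \<in> psi m (l,r)"
  proof (intro ballI impI)
    fix x y z assume x: "x \<in> psi m (l,r)" and y: "y \<in> psi m (l,r)" and z: "z \<in> grid2 m n"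
      and le: "le2 x z \<and> le2 z y"
    obtain a1 b1 where x': "x = (a1,b1)" by fastforce
    obtain a2 b2 where y': "y = (a2,b2)" by fastforce
    obtain c d where z': "z = (c,d)" by fastforce
    have hx: "1 \<le> a1" "a1 \<le> m" "l (a1-1) \<le> b1" "b1 \<le> r (a1-1)" using x unfolding x' psi_mem by auto
    have hy: "1 \<le> a2" "a2 \<le> m" "l (a2-1) \<le> b2" "b2 \<le> r (a2-1)" using y unfolding y' psi_mem by auto
    have hz: "1 \<le> c" "c \<le> m" using z unfolding z' grid2_def by auto
    have hl: "a1 \<le> c" "c \<le> a2" "b1 \<le> d" "d \<le> b2" using le unfolding x' y' z' le2_def by auto
    have m1: "l (c-1) \<le> l (a1-1)" using Fs_mono[OF p, of "a1-1" "c-1"] hx hz hl by simp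
    have m2: "r (a2-1) \<le> r (c-1)" using Fs_mono[OF p, of "c-1" "a2-1"] hy hz hl by simp
    show "z \<in> psi m (l,r)" unfolding z' psi_mem using hz hl hx hy m1 m2 by linarith
  qed
  have full: "\<forall>a\<in>{1..m}. \<exists>b. (a, b) \<in> psi m (l,r)"
  proof
    fix a assume a: "a \<in> {1..m}"
    have "a - 1 < m" using a by auto
    then have "l (a-1) \<le> r (a-1)" using Fs_bound[OF p, of "a-1"] by simp
    then have "(a, l (a-1)) \<in> psi m (l,r)" unfolding psi_mem using a by simp
    then show "\<exists>b. (a, b) \<in> psi m (l,r)" by blast
  qed
  have "interval_closed (grid2 m n) le2 (psi m (l,r))"
    unfolding interval_closed_def using sub cl by (intro conjI)
  then show ?thesis unfolding row_full_ics_def mem_Collect_eq using full by (intro conjI)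
qed

lemma phi_psi: assumes p: "(l,r) \<in> Fs m n n" shows "phi m (psi m (l,r)) = (l,r)"
proof -
  have row: "rowset (psi m (l,r)) (Suc i) = {l i..r i}" if i: "i < m" for i
    unfolding rowset_def using i by (auto simp: psi_mem)
  have lr: "l i \<le> r i" if "i < m" for i using Fs_bound[OF p that] by simp
  have mn: "Min (rowset (psi m (l,r)) (Suc i)) = l i" if i: "i < m" for i
    unfolding row[OF i] by (rule Min_eqI) (use lr[OF i] in auto)
  have mx: "Max (rowset (psi m (l,r)) (Suc i)) = r i" if i: "i < m" for i
    unfolding row[OF i] by (rule Max_eqI) (use lr[OF i] in auto)
  have o: "l i = 0 \<and> r i = 0" if "m \<le> i" for i using Fs_out[OF p that] .
  show ?thesis unfolding phi_def
  proof (simp only: prod.inject, intro conjI ext)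
    fix i show "(if i < m then Min (rowset (psi m (l, r)) (Suc i)) else 0) = l i"
      using mn[of i] o[of i] by (cases "i < m") auto
  next
    fix i show "(if i < m then Max (rowset (psi m (l, r)) (Suc i)) else 0) = r i"
      using mx[of i] o[of i] by (cases "i < m") auto
  qed
qed

lemma psi_phi: assumes I: "I \<in> row_full_ics m n" shows "psi m (phi m I) = I"
proof (intro set_eqI)
  fix z :: "nat \<times> nat"
  obtain a b where z: "z = (a,b)" by fastforce
  have "phi m I = (fst (phi m I), snd (phi m I))" by simp
  have f: "fst (phi m I) i = (if i<m then Min (rowset I (Suc i)) else 0)"
    and g: "snd (phi m I) i = (if i<m then Max (rowset I (Suc i)) else 0)" for i
    unfolding phi_def by auto
  show "z \<in> psi m (phi m I) \<longleftrightarrow> z \<in> I"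
  proof
    assume "z \<in> psi m (phi m I)"
    then have h: "1 \<le> a" "a \<le> m" "fst (phi m I) (a-1) \<le> b" "b \<le> snd (phi m I) (a-1)"
      unfolding z psi_def by auto
    have a: "a \<in> {1..m}" "Suc (a-1) = a" "a - 1 < m" using h by auto
    have "Min (rowset I a) \<le> b \<and> b \<le> Max (rowset I a)" using h(3,4) unfolding f g using a by simp
    then have "b \<in> rowset I a" using row_iff[OF I a(1)] by blast
    then show "z \<in> I" unfolding z rowset_def by simp
  next
    assume zi: "z \<in> I"
    then have "z \<in> grid2 m n" using rf_sub[OF I] by blast
    then have a: "a \<in> {1..m}" unfolding z grid2_def by auto
    then have a': "Suc (a-1) = a" "a - 1 < m" by auto
    have "b \<in> rowset I a" using zi unfolding z rowset_def by simp
    then have "Min (rowset I a) \<le> b \<and> b \<le> Max (rowset I a)" using row_iff[OF I a] by blast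
    then show "z \<in> psi m (phi m I)" unfolding z psi_def f g using a a' by simp
  qed
qed

lemma bij_phi: "bij_betw (phi m) (row_full_ics m n) (Fs m n n)"
proof (rule bij_betw_byWitness[where f' = "psi m"])
  show "\<forall>I\<in>row_full_ics m n. psi m (phi m I) = I" using psi_phi by blast
  show "\<forall>p\<in>Fs m n n. phi m (psi m p) = p"
  proof
    fix p assume "p \<in> Fs m n n"
    moreover obtain l r where "p = (l,r)" by fastforce
    ultimately show "phi m (psi m p) = p" using phi_psi by blast
  qed
  show "phi m ` row_full_ics m n \<subseteq> Fs m n n" using phi_in by blast
  show "psi m ` Fs m n n \<subseteq> row_full_ics m n"
  proof
    fix I assume "I \<in> psi m ` Fs m n n"
    then obtain l r where "(l,r) \<in> Fs m n n" "I = psi m (l,r)" by force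
    then show "I \<in> row_full_ics m n" using psi_in by blast
  qed
qed



definition lay :: "(nat\<times>nat\<times>nat) set \<Rightarrow> nat \<Rightarrow> nat \<Rightarrow> nat set" where "lay J a c = {b. (a,b,c) \<in> J}"

definition chi :: "nat \<Rightarrow> nat \<Rightarrow> (nat\<Rightarrow>nat)\<times>(nat\<Rightarrow>nat) \<Rightarrow> (nat\<times>nat\<times>nat) set" where
  "chi m n p = {(a,b,c). (a,b,c) \<in> grid3 m (n-1) 2 \<and> (c = 1 \<longrightarrow> b < snd p (a-1)) \<and> (c = 2 \<longrightarrow> b < fst p (a-1))}"

definition chi' :: "nat \<Rightarrow> (nat\<times>nat\<times>nat) set \<Rightarrow> (nat\<Rightarrow>nat)\<times>(nat\<Rightarrow>nat)" where
  "chi' m J = (\<lambda>i. if i<m then card (lay J (Suc i) 2) + 1 else 0, \<lambda>i. if i<m then card (lay J (Suc i) 1) + 1 else 0)"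

definition OI :: "nat \<Rightarrow> nat \<Rightarrow> (nat\<times>nat\<times>nat) set set" where
  "OI m n = {J. order_ideal (grid3 m (n - 1) 2) le3 J}"

lemma oi_sub: "J \<in> OI m n \<Longrightarrow> J \<subseteq> grid3 m (n-1) 2"
  unfolding OI_def mem_Collect_eq order_ideal_def by (rule conjunct1)

lemma oi_down: assumes "J \<in> OI m n" "y \<in> J" "x \<in> grid3 m (n-1) 2" "le3 x y" shows "x \<in> J"
proof -
  have "\<forall>y\<in>J. \<forall>x\<in>grid3 m (n-1) 2. le3 x y \<longrightarrow> x \<in> J"
    using assms(1) unfolding OI_def mem_Collect_eq order_ideal_def by (rule conjunct2)
  then show ?thesis using assms(2-4) by blast
qed

lemma g3: "(a,b,c) \<in> grid3 m k d \<longleftrightarrow> 1 \<le> a \<and> a \<le> m \<and> 1 \<le> b \<and> b \<le> k \<and> 1 \<le> c \<and> c \<le> d"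
  unfolding grid3_def by auto

lemma l3: "le3 (a,b,c) (a',b',c') \<longleftrightarrow> a \<le> a' \<and> b \<le> b' \<and> c \<le> c'"
  unfolding le3_def by simp

lemma lay_sub: assumes "J \<in> OI m n" shows "lay J a c \<subseteq> {1..n-1}"
proof
  fix b assume "b \<in> lay J a c"
  then have "(a,b,c) \<in> J" by (simp add: lay_def)
  then have "(a,b,c) \<in> grid3 m (n-1) 2" using oi_sub[OF assms] by blast
  then show "b \<in> {1..n-1}" by (simp add: g3)
qed

lemma lay_fin: assumes "J \<in> OI m n" shows "finite (lay J a c)"
  using finite_subset[OF lay_sub[OF assms]] by simp

lemma lay_card: assumes "J \<in> OI m n" shows "card (lay J a c) \<le> n - 1"
  using card_mono[OF _ lay_sub[OF assms]] by simp

lemma lay_down: assumes J: "J \<in> OI m n" and b: "b \<in> lay J a c" and "1 \<le> b'" "b' \<le> b"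
  shows "b' \<in> lay J a c"
proof -
  have y: "(a,b,c) \<in> J" using b by (simp add: lay_def)
  then have "(a,b,c) \<in> grid3 m (n-1) 2" using oi_sub[OF J] by blast
  then have x: "(a,b',c) \<in> grid3 m (n-1) 2" using assms(3,4) by (simp add: g3)
  have "(a,b',c) \<in> J" by (rule oi_down[OF J y x]) (use assms(4) in \<open>simp add: l3\<close>)
  then show ?thesis by (simp add: lay_def)
qed

lemma dc_interval: fixes S :: "nat set" assumes fin: "finite S" and dc: "\<And>b b'. b \<in> S \<Longrightarrow> 1 \<le> b' \<Longrightarrow> b' \<le> b \<Longrightarrow> b' \<in> S"
  and pos: "\<And>b. b \<in> S \<Longrightarrow> 1 \<le> b"
  shows "S = {1..card S}"
proof (cases "S = {}")
  case True then show ?thesis by simp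
next
  case False
  have e: "S = {1..Max S}"
  proof
    show "S \<subseteq> {1..Max S}" using Max_ge[OF fin] pos by auto
    show "{1..Max S} \<subseteq> S" using dc[OF Max_in[OF fin False]] by auto
  qed
  then have "card S = Max S" by (metis card_atLeastAtMost diff_Suc_1)
  then show ?thesis using e by simp
qed

lemma lay_eq: assumes J: "J \<in> OI m n" shows "lay J a c = {1..card (lay J a c)}"
proof (rule dc_interval[OF lay_fin[OF J]])
  show "\<And>b b'. b \<in> lay J a c \<Longrightarrow> 1 \<le> b' \<Longrightarrow> b' \<le> b \<Longrightarrow> b' \<in> lay J a c" using lay_down[OF J] by blast
  fix b assume "b \<in> lay J a c"
  then have "b \<in> {1..n-1}" using lay_sub[OF J] by blast
  then show "1 \<le> b" by simp
qed

lemma lay_c: assumes J: "J \<in> OI m n" shows "lay J a 2 \<subseteq> lay J a 1"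
proof
  fix b assume "b \<in> lay J a 2"
  then have y: "(a,b,2) \<in> J" by (simp add: lay_def)
  then have "(a,b,2) \<in> grid3 m (n-1) 2" using oi_sub[OF J] by blast
  then have x: "(a,b,1) \<in> grid3 m (n-1) 2" by (simp add: g3)
  have "(a,b,1) \<in> J" by (rule oi_down[OF J y x]) (simp add: l3)
  then show "b \<in> lay J a 1" by (simp add: lay_def)
qed

lemma lay_a: assumes J: "J \<in> OI m n" and a: "1 \<le> a" shows "lay J (Suc a) c \<subseteq> lay J a c"
proof
  fix b assume "b \<in> lay J (Suc a) c"
  then have y: "(Suc a,b,c) \<in> J" by (simp add: lay_def)
  then have "(Suc a,b,c) \<in> grid3 m (n-1) 2" using oi_sub[OF J] by blast
  then have x: "(a,b,c) \<in> grid3 m (n-1) 2" using a by (simp add: g3)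
  have "(a,b,c) \<in> J" by (rule oi_down[OF J y x]) (simp add: l3)
  then show "b \<in> lay J a c" by (simp add: lay_def)
qed

lemma chi'_in: assumes J: "J \<in> OI m n" and n: "1 \<le> n" shows "chi' m J \<in> Fs m n n"
proof -
  obtain f g where fg: "chi' m J = (f,g)" by fastforce
  have f: "f i = (if i<m then card (lay J (Suc i) 2) + 1 else 0)" and g: "g i = (if i<m then card (lay J (Suc i) 1) + 1 else 0)" for i
    using fg unfolding chi'_def by auto
  show ?thesis unfolding fg
  proof (rule Fs_intro)
    fix i assume i: "i < m"
    have c21: "card (lay J (Suc i) 2) \<le> card (lay J (Suc i) 1)"
      by (rule card_mono[OF lay_fin[OF J] lay_c[OF J]])
    have b1: "card (lay J (Suc i) 1) \<le> n - 1" "card (lay J (Suc i) 2) \<le> n - 1" using lay_card[OF J] by auto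
    have mono: "card (lay J (Suc i) c) \<le> card (lay J i c)" if "0 < i" for c
      by (rule card_mono[OF lay_fin[OF J] lay_a[OF J]]) (use that in simp)
    show "1 \<le> f i \<and> f i \<le> g i \<and> f i \<le> (if i = 0 then n else f (i-1)) \<and> g i \<le> (if i = 0 then n else g (i-1))"
    proof (cases i)
      case 0
      have "card (lay J (Suc i) 2) + 1 \<le> n" "card (lay J (Suc i) 1) + 1 \<le> n" using b1 n by linarith+
      with \<open>i = 0\<close> show ?thesis using i c21 unfolding f g by simp
    next
      case (Suc k)
      then have "Suc (i - 1) = i" "i - 1 < m" using i by auto
      then show ?thesis using i c21 mono[of 1] mono[of 2] Suc unfolding f g by simp
    qed
  next
    fix i assume "m \<le> i" then show "f i = 0 \<and> g i = 0" unfolding f g by auto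
  qed
qed

lemma chi_mem: "(a,b,c) \<in> chi m n (l,r) \<longleftrightarrow> (a,b,c) \<in> grid3 m (n-1) 2 \<and> (c = 1 \<longrightarrow> b < r (a-1)) \<and> (c = 2 \<longrightarrow> b < l (a-1))"
  unfolding chi_def by simp

lemma chi_in: assumes p: "(l,r) \<in> Fs m n n" shows "chi m n (l,r) \<in> OI m n"
proof -
  have sub: "chi m n (l,r) \<subseteq> grid3 m (n-1) 2" unfolding chi_def by auto
  have dn: "\<forall>y\<in>chi m n (l,r). \<forall>x\<in>grid3 m (n-1) 2. le3 x y \<longrightarrow> x \<in> chi m n (l,r)"
  proof (intro ballI impI)
    fix x y assume y: "y \<in> chi m n (l,r)" and x: "x \<in> grid3 m (n-1) 2" and le: "le3 x y"
    obtain a b c where y': "y = (a,b,c)" by (metis prod.exhaust)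
    obtain a' b' c' where x': "x = (a',b',c')" by (metis prod.exhaust)
    have hy: "1 \<le> a" "a \<le> m" "1 \<le> c" "c \<le> 2" "c = 1 \<longrightarrow> b < r (a-1)" "c = 2 \<longrightarrow> b < l (a-1)"
      using y unfolding y' chi_mem g3 by auto
    have hx: "1 \<le> a'" "1 \<le> c'" using x unfolding x' g3 by auto
    have hl: "a' \<le> a" "b' \<le> b" "c' \<le> c" using le unfolding x' y' l3 by auto
    have mo: "l (a-1) \<le> l (a'-1) \<and> r (a-1) \<le> r (a'-1)" using Fs_mono[OF p, of "a'-1" "a-1"] hy hx hl by simp
    have lr: "l (a-1) \<le> r (a-1)" using Fs_bound[OF p, of "a-1"] hy by simp
    have "(c' = 1 \<longrightarrow> b' < r (a'-1)) \<and> (c' = 2 \<longrightarrow> b' < l (a'-1))"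
    proof (cases "c = 1")
      case True
      then have "c' = 1" using hl hx by simp
      then show ?thesis using True hy hl mo by simp
    next
      case False
      then have "c = 2" using hy by simp
      then show ?thesis using hy hl mo lr by auto
    qed
    then show "x \<in> chi m n (l,r)" unfolding x' chi_mem using x x' by simp
  qed
  show ?thesis unfolding OI_def mem_Collect_eq order_ideal_def using sub dn by (intro conjI)
qed

lemma chi'_chi: assumes p: "(l,r) \<in> Fs m n n" shows "chi' m (chi m n (l,r)) = (l,r)"
proof -
  have bd: "1 \<le> l i \<and> l i \<le> r i \<and> l i \<le> n \<and> r i \<le> n" if "i < m" for i using Fs_bound[OF p that] by simp
  have L1: "lay (chi m n (l,r)) (Suc i) 1 = {1..<r i}" if i: "i < m" for i
    unfolding lay_def chi_mem g3 using i bd[OF i] by auto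
  have L2: "lay (chi m n (l,r)) (Suc i) 2 = {1..<l i}" if i: "i < m" for i
    unfolding lay_def chi_mem g3 using i bd[OF i] by auto
  have o: "l i = 0 \<and> r i = 0" if "m \<le> i" for i using Fs_out[OF p that] .
  show ?thesis unfolding chi'_def
  proof (simp only: prod.inject, intro conjI ext)
    fix i show "(if i < m then card (lay (chi m n (l, r)) (Suc i) 2) + 1 else 0) = l i"
      using L2[of i] o[of i] bd[of i] by (cases "i < m") auto
  next
    fix i show "(if i < m then card (lay (chi m n (l, r)) (Suc i) 1) + 1 else 0) = r i"
      using L1[of i] o[of i] bd[of i] by (cases "i < m") auto
  qed
qed

lemma chi_chi': assumes J: "J \<in> OI m n" shows "chi m n (chi' m J) = J"
proof (intro set_eqI)
  fix z :: "nat \<times> nat \<times> nat"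
  obtain a b c where z: "z = (a,b,c)" by (metis prod.exhaust)
  have f: "fst (chi' m J) i = (if i<m then card (lay J (Suc i) 2) + 1 else 0)"
    and g: "snd (chi' m J) i = (if i<m then card (lay J (Suc i) 1) + 1 else 0)" for i
    unfolding chi'_def by auto
  have key: "b \<in> lay J a c \<longleftrightarrow> 1 \<le> b \<and> b < card (lay J a c) + 1" for c
    using lay_eq[OF J, of a c] by (metis atLeastAtMost_iff less_Suc_eq_le Suc_eq_plus1)
  show "z \<in> chi m n (chi' m J) \<longleftrightarrow> z \<in> J"
  proof (cases "z \<in> grid3 m (n-1) 2")
    case False
    then show ?thesis using oi_sub[OF J] unfolding chi_def by auto
  next
    case True
    then have h: "1 \<le> a" "a \<le> m" "1 \<le> b" "c = 1 \<or> c = 2" unfolding z g3 by auto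
    then have a: "Suc (a-1) = a" "a - 1 < m" by auto
    have "z \<in> chi m n (chi' m J) \<longleftrightarrow> (c = 1 \<longrightarrow> b < card (lay J a 1) + 1) \<and> (c = 2 \<longrightarrow> b < card (lay J a 2) + 1)"
      using True unfolding z chi_def f g using a by simp
    also have "\<dots> \<longleftrightarrow> b \<in> lay J a c" using key[of 1] key[of 2] h by auto
    also have "\<dots> \<longleftrightarrow> z \<in> J" unfolding z lay_def by simp
    finally show ?thesis .
  qed
qed

lemma bij_chi: assumes n: "1 \<le> n" shows "bij_betw (chi m n) (Fs m n n) (OI m n)"
proof (rule bij_betw_byWitness[where f' = "chi' m"])
  show "\<forall>p\<in>Fs m n n. chi' m (chi m n p) = p"
  proof
    fix p assume "p \<in> Fs m n n"
    moreover obtain l r where "p = (l,r)" by fastforce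
    ultimately show "chi' m (chi m n p) = p" using chi'_chi by blast
  qed
  show "\<forall>J\<in>OI m n. chi m n (chi' m J) = J" using chi_chi' by blast
  show "chi m n ` Fs m n n \<subseteq> OI m n"
  proof
    fix J assume "J \<in> chi m n ` Fs m n n"
    then obtain l r where "(l,r) \<in> Fs m n n" "J = chi m n (l,r)" by force
    then show "J \<in> OI m n" using chi_in by blast
  qed
  show "chi' m ` OI m n \<subseteq> Fs m n n" using chi'_in[OF _ n] by blast
qed


theorem theorem4p4:
  fixes m n :: nat
  assumes "m \<ge> 1" and "n \<ge> 2"
  shows "real (card (row_full_ics m n))
           = (1 / real n) * real ((n + m) choose (n - 1)) * real ((n + m - 1) choose (n - 1))
       \<and> real (card (row_full_ics m n)) = narayana (n + m) n
       \<and> card (row_full_ics m n) = card {J. order_ideal (grid3 m (n - 1) 2) le3 J}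
       \<and> (\<exists>f. bij_betw f (row_full_ics m n) {J. order_ideal (grid3 m (n - 1) 2) le3 J})"
proof -
  have n1: "1 \<le> n" using assms(2) by simp
  have bij1: "bij_betw (phi m) (row_full_ics m n) (Fs m n n)" by (rule bij_phi)
  have bij2: "bij_betw (chi m n) (Fs m n n) (OI m n)" by (rule bij_chi[OF n1])
  have bij: "bij_betw (chi m n \<circ> phi m) (row_full_ics m n) {J. order_ideal (grid3 m (n - 1) 2) le3 J}"
    using bij_betw_trans[OF bij1 bij2] unfolding OI_def .
  have c1: "card (row_full_ics m n) = card (Fs m n n)" by (rule bij_betw_same_card[OF bij1])
  have c2: "int (card (Fs m n n)) = D m n n" by (rule Fs_count[OF n1 order_refl])
  have r: "real (card (row_full_ics m n)) = real_of_int (D m n n)"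
    unfolding c1 c2[symmetric] by simp
  have e1: "real (card (row_full_ics m n))
           = (1 / real n) * real ((n + m) choose (n - 1)) * real ((n + m - 1) choose (n - 1))"
    unfolding r by (rule Dnar[OF assms])
  have e2: "real (card (row_full_ics m n)) = narayana (n + m) n"
    unfolding e1 narayana_def by simp
  have e3: "card (row_full_ics m n) = card {J. order_ideal (grid3 m (n - 1) 2) le3 J}"
    by (rule bij_betw_same_card[OF bij])
  show ?thesis using e1 e2 e3 bij by blast
qed

end
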